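(* Let $k, \mu, n$ be positive integers and $s$ a nonnegative integer such that $k^4\mu^4 n^4 - 16k(4\mu^2+n^2) = s^2$. Let $\beta$ be a positive integer. If $k^2\mu^2 n^2 - s = 2\beta$, then \[ \beta^3 + 64 = (\beta k\mu^2 - 4)(\beta k n^2 - 16) \] and $k$ divides $\beta^2$. If $k^2\mu^2 n^2 - s \geq 2\beta$, then $\beta^3 + 64 \geq (\beta k \mu^2 - 4)(\beta k n^2 - 16)$. *)

theory Defs
  imports Main
begin

end

theory Submission
  imports Defs
begin

theorem lemma6:
  fixes k \<mu> n s \<beta> :: int
  assumes "k > 0" and "\<mu> > 0" and "n > 0" and "s \<ge> 0"
    and "k^4 * \<mu>^4 * n^4 - 16 * k * (4 * \<mu>^2 + n^2) = s^2"
    and "\<beta> > 0"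
  shows "(k^2 * \<mu>^2 * n^2 - s = 2 * \<beta> \<longrightarrow>
            \<beta>^3 + 64 = (\<beta> * k * \<mu>^2 - 4) * (\<beta> * k * n^2 - 16) \<and> k dvd \<beta>^2)
       \<and> (k^2 * \<mu>^2 * n^2 - s \<ge> 2 * \<beta> \<longrightarrow>
            \<beta>^3 + 64 \<ge> (\<beta> * k * \<mu>^2 - 4) * (\<beta> * k * n^2 - 16))"
proof -
  define A where "A = k^2 * \<mu>^2 * n^2"
  define C where "C = k * (4 * \<mu>^2 + n^2)"
  have A2: "A^2 = k^4 * \<mu>^4 * n^4" unfolding A_def
    by (simp add: power_mult_distrib flip: power_mult)
  have e: "16 * C = A^2 - s^2" using assms(5) unfolding A2 C_def by simp
  have r: "(\<beta> * k * \<mu>^2 - 4) * (\<beta> * k * n^2 - 16) = \<beta> * (\<beta> * A - 4 * C) + 64"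
    unfolding A_def C_def by (simp add: power2_eq_square algebra_simps)
  have 1: "\<beta>^3 + 64 = (\<beta> * k * \<mu>^2 - 4) * (\<beta> * k * n^2 - 16) \<and> k dvd \<beta>^2"
    if h: "A - s = 2 * \<beta>"
  proof -
    have s: "s = A - 2*\<beta>" using h by simp
    have "16 * C = 4*A*\<beta> - 4*\<beta>^2" using e unfolding s by (simp add: power2_eq_square algebra_simps)
    hence b2: "\<beta>^2 = \<beta> * A - 4 * C" by (simp add: algebra_simps)
    have "\<beta>^3 = \<beta> * \<beta>^2" by (simp add: power3_eq_cube power2_eq_square)
    hence "\<beta>^3 + 64 = (\<beta> * k * \<mu>^2 - 4) * (\<beta> * k * n^2 - 16)" using r b2 by simp
    moreover have "k dvd \<beta>^2" unfolding b2 A_def C_def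
      by (simp add: power2_eq_square)
    ultimately show ?thesis by simp
  qed
  have 2: "\<beta>^3 + 64 \<ge> (\<beta> * k * \<mu>^2 - 4) * (\<beta> * k * n^2 - 16)"
    if h: "A - s \<ge> 2 * \<beta>"
  proof -
    have "(2*\<beta> - A - s) * (2*\<beta> - A + s) \<ge> 0"
      using h assms(4) by (intro mult_nonpos_nonpos) auto
    hence "4*(\<beta>^2 - \<beta> * A + 4 * C) \<ge> 0" using e by (simp add: power2_eq_square algebra_simps)
    hence g: "\<beta>^2 \<ge> \<beta> * A - 4 * C" by simp
    have "\<beta> * (\<beta> * A - 4 * C) \<le> \<beta> * \<beta>^2" using g assms(6) by simp
    thus ?thesis using r by (simp add: power3_eq_cube power2_eq_square)
  qed
  show ?thesis using 1 2 unfolding A_def by blast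
qed

end
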